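(* Let $u=0$ and $\theta\in(1/2,1]$. If there exists $p\in\mathbb R$ such that $$F\big(A^{\frac p2-1}BA^{-\frac p2}\big)\subseteq D(0,1)=\{z\in\mathbb C:|z|<1\},$$ then the $\theta$-method is unconditionally stable, i.e. it is stable for every step size $h=\tau/m$, $m\in\mathbb N$.
   Context: Let $N\in\mathbb N$, $\tau>0$, let $A\in M_N(\mathbb C)$ be Hermitian positive definite and $B\in M_N(\mathbb C)$ arbitrary, and consider the delay differential equation $y'(t)=-Ay(t)+By(t-\tau)$. Fix $\theta\in[0,1]$, $u\in[0,1)$ and $m\in\mathbb N$ (with $m\ge2$ if $u>0$), and set the step size $h=\tau/(m-u)$. The $\theta$-method (with linear interpolation of the delayed term) is the recursion, for $n\ge0$ and arbitrary starting values $y_{-m},\dots,y_0\in\mathbb C^N$, $$y_{n+1}=y_n+h(1-\theta)\big[-Ay_n+B((1-u)y_{n-m}+u\,y_{n-m+1})\big]+h\theta\big[-Ay_{n+1}+B((1-u)y_{n-m+1}+u\,y_{n-m+2})\big].$$ The method is called stable (for these $\theta,u,m,h$) if for every choice of starting values $y_n\to0$ as $n\to\infty$. For $s\in\mathbb R$, $A^s$ is defined through the spectral decomposition of $A$. For $M\in M_N(\mathbb C)$, $F(M)=\{x^*Mx: x\in\mathbb C^N,\ x^*x=1\}$ is the field of values. *)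

theory Defs
  imports "HOL-Analysis.Analysis"
begin

text \<open>N x N complex matrices are represented as complex^'n^'n with 'n a finite type, N = CARD('n).\<close>

definition cmat_adj :: "complex^'n^'m \<Rightarrow> complex^'m^'n" where
  "cmat_adj M = (\<chi> i j. cnj (M $ j $ i))"

definition cinner :: "complex^'n \<Rightarrow> complex^'n \<Rightarrow> complex" where
  "cinner x y = (\<Sum>i\<in>UNIV. cnj (x $ i) * y $ i)"

definition hermitian_mat :: "complex^'n^'n \<Rightarrow> bool" where
  "hermitian_mat A \<longleftrightarrow> cmat_adj A = A"

definition pos_def_mat :: "complex^'n^'n \<Rightarrow> bool" where
  "pos_def_mat A \<longleftrightarrow> hermitian_mat A \<and> (\<forall>x. x \<noteq> 0 \<longrightarrow> Re (cinner x (A *v x)) > 0)"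

definition unitary_mat :: "complex^'n^'n \<Rightarrow> bool" where
  "unitary_mat U \<longleftrightarrow> cmat_adj U ** U = mat 1"

definition diag_real :: "('n \<Rightarrow> real) \<Rightarrow> complex^'n^'n" where
  "diag_real d = (\<chi> i j. if i = j then complex_of_real (d i) else 0)"

definition mat_powr :: "complex^'n^'n \<Rightarrow> real \<Rightarrow> complex^'n^'n" where
  "mat_powr A s = (SOME M. \<exists>U d. unitary_mat U \<and> (\<forall>i. d i > 0) \<and>
      A = U ** diag_real d ** cmat_adj U \<and> M = U ** diag_real (\<lambda>i. d i powr s) ** cmat_adj U)"

definition field_of_values :: "complex^'n^'n \<Rightarrow> complex set" where
  "field_of_values M = {cinner x (M *v x) | x. cinner x x = 1}"

text \<open>The theta-method recursion with linear interpolation of the delayed term, for all n \<ge> 0,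
  indices as integers (starting values y_{-m},...,y_0 are unconstrained).\<close>
definition theta_recursion ::
  "complex^'n^'n \<Rightarrow> complex^'n^'n \<Rightarrow> real \<Rightarrow> real \<Rightarrow> nat \<Rightarrow> real \<Rightarrow> (int \<Rightarrow> complex^'n) \<Rightarrow> bool" where
  "theta_recursion A B \<theta> u m h y \<longleftrightarrow> (\<forall>n::int. n \<ge> 0 \<longrightarrow>
     y (n + 1) = y n
       + (h * (1 - \<theta>)) *\<^sub>R (- (A *v y n) + B *v ((1 - u) *\<^sub>R y (n - int m) + u *\<^sub>R y (n - int m + 1)))
       + (h * \<theta>) *\<^sub>R (- (A *v y (n + 1)) + B *v ((1 - u) *\<^sub>R y (n - int m + 1) + u *\<^sub>R y (n - int m + 2))))"

definition theta_stable ::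
  "complex^'n^'n \<Rightarrow> complex^'n^'n \<Rightarrow> real \<Rightarrow> real \<Rightarrow> nat \<Rightarrow> real \<Rightarrow> bool" where
  "theta_stable A B \<theta> u m h \<longleftrightarrow>
     (\<forall>y. theta_recursion A B \<theta> u m h y \<longrightarrow> (\<lambda>n::nat. y (int n)) \<longlonglongrightarrow> 0)"

end

theory Submission
  imports Defs "HOL-Computational_Algebra.Formal_Laurent_Series" "HOL-Computational_Algebra.Fundamental_Theorem_Algebra"
begin

lemma cinner_add_right: "cinner x (y + z) = cinner x y + cinner x z"
  by (simp add: cinner_def sum.distrib distrib_left)
lemma cinner_add_left: "cinner (x + y) z = cinner x z + cinner y z"
  by (simp add: cinner_def sum.distrib distrib_right)
lemma cinner_diff_right: "cinner x (y - z) = cinner x y - cinner x z"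
  by (simp add: cinner_def sum_subtractf right_diff_distrib)
lemma cinner_diff_left: "cinner (x - y) z = cinner x z - cinner y z"
  by (simp add: cinner_def sum_subtractf left_diff_distrib)
lemma cinner_minus_right: "cinner x (- y) = - cinner x y"
  by (simp add: cinner_def sum_negf)
lemma cinner_minus_left: "cinner (- x) y = - cinner x y"
  by (simp add: cinner_def sum_negf)
lemma cinner_zero_right[simp]: "cinner x 0 = 0"
  by (simp add: cinner_def)
lemma cinner_zero_left[simp]: "cinner 0 x = 0"
  by (simp add: cinner_def)
lemma cinner_smult_right: "cinner x (c *s y) = c * cinner x y"
  by (simp add: cinner_def sum_distrib_left mult.left_commute)
lemma cinner_smult_left: "cinner (c *s x) y = cnj c * cinner x y"
  by (simp add: cinner_def sum_distrib_left mult.assoc)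
lemma cinner_scaleR_right: "cinner x (r *\<^sub>R y) = of_real r * cinner x y"
  unfolding cinner_def vector_scaleR_component
  by (simp add: sum_distrib_left scaleR_conv_of_real mult.left_commute)
lemma cinner_scaleR_left: "cinner (r *\<^sub>R x) y = of_real r * cinner x y"
  unfolding cinner_def vector_scaleR_component
  by (simp add: sum_distrib_left scaleR_conv_of_real mult.assoc)
lemma cinner_sum_right: "cinner x (sum f S) = (\<Sum>i\<in>S. cinner x (f i))"
  by (induction S rule: infinite_finite_induct) (auto simp: cinner_add_right)
lemma cinner_commute: "cinner y x = cnj (cinner x y)"
  by (simp add: cinner_def mult.commute)

lemma cinner_adj: "cinner x (M *v y) = cinner (cmat_adj M *v x) y"
proof -
  have "cinner x (M *v y) = (\<Sum>i\<in>UNIV. \<Sum>j\<in>UNIV. cnj (x $ i) * (M $ i $ j * y $ j))"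
    by (simp add: cinner_def matrix_vector_mult_def sum_distrib_left)
  also have "\<dots> = (\<Sum>j\<in>UNIV. \<Sum>i\<in>UNIV. cnj (x $ i) * (M $ i $ j * y $ j))"
    by (rule sum.swap)
  also have "\<dots> = cinner (cmat_adj M *v x) y"
    unfolding cinner_def matrix_vector_mult_def cmat_adj_def
    by (simp add: sum_distrib_left mult_ac)
  finally show ?thesis .
qed

lemma cmat_adj_adj[simp]: "cmat_adj (cmat_adj M) = M"
  by (simp add: cmat_adj_def vec_eq_iff)

lemma cmat_adj_mult: "cmat_adj (M ** K) = cmat_adj K ** cmat_adj M"
  by (simp add: cmat_adj_def matrix_matrix_mult_def vec_eq_iff mult.commute)

lemma cinner_adj': "cinner (M *v x) y = cinner x (cmat_adj M *v y)"
  by (simp add: cinner_adj)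

lemma herm_cinner: "hermitian_mat A \<Longrightarrow> cinner x (A *v y) = cinner (A *v x) y"
  by (simp add: cinner_adj hermitian_mat_def)

lemma cinner_self_real: "cinner x x = of_real (\<Sum>i\<in>UNIV. (cmod (x $ i))\<^sup>2)"
  unfolding cinner_def of_real_sum
proof (rule sum.cong)
  fix i
  have "complex_of_real ((cmod (x $ i))\<^sup>2) = x $ i * cnj (x $ i)" by (rule complex_norm_square)
  then show "cnj (x $ i) * x $ i = complex_of_real ((cmod (x $ i))\<^sup>2)" by (simp add: mult.commute)
qed simp

lemma norm_sq_vec: "(norm (x::complex^'n))\<^sup>2 = (\<Sum>i\<in>UNIV. (cmod (x $ i))\<^sup>2)"
  by (simp add: norm_vec_def L2_set_def sum_nonneg)

lemma cinner_self_norm: "cinner x x = of_real ((norm x)\<^sup>2)"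
  by (simp add: cinner_self_real norm_sq_vec)

lemma cinner_self_eq_0[simp]: "cinner x x = 0 \<longleftrightarrow> x = 0"
  by (simp add: cinner_self_norm)

lemma Re_cinner_self: "Re (cinner x x) = (norm x)\<^sup>2"
  by (simp add: cinner_self_norm)

lemma continuous_cinner_right: "continuous_on S (\<lambda>x. cinner a x)"
  unfolding cinner_def by (intro continuous_intros)

definition orthoeig :: "complex^'n^'n \<Rightarrow> 'n set \<Rightarrow> ('n \<Rightarrow> complex^'n) \<Rightarrow> ('n \<Rightarrow> real) \<Rightarrow> bool" where
 "orthoeig A K e d \<longleftrightarrow> (\<forall>i\<in>K. \<forall>j\<in>K. cinner (e i) (e j) = (if i = j then 1 else 0)) \<and>
     (\<forall>i\<in>K. A *v e i = complex_of_real (d i) *s e i \<and> d i > 0)"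

lemma W_nonzero:
  fixes e :: "'n \<Rightarrow> complex^'n"
  assumes fin: "finite K" and card: "card K < CARD('n)"
    and orth: "\<forall>i\<in>K. \<forall>j\<in>K. cinner (e i) (e j) = (if i = j then 1 else 0)"
  shows "\<exists>w. w \<noteq> 0 \<and> (\<forall>i\<in>K. cinner (e i) w = 0)"
proof -
  have "vec.span (e ` K) \<noteq> UNIV"
  proof
    assume h: "vec.span (e ` K) = UNIV"
    have "CARD('n) = vec.dim (UNIV :: (complex^'n) set)" by (rule vec_dim_card[symmetric])
    also have "\<dots> = vec.dim (e ` K)" using h vec.dim_span by metis
    also have "\<dots> \<le> card (e ` K)" using fin by (simp add: vec.dim_le_card')
    also have "\<dots> \<le> card K" using fin by (simp add: card_image_le)
    finally show False using card by simp
  qed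
  then obtain z where z: "z \<notin> vec.span (e ` K)" by blast
  define w where "w = z - (\<Sum>i\<in>K. cinner (e i) z *s e i)"
  have "w \<noteq> 0"
  proof
    assume "w = 0"
    then have "z = (\<Sum>i\<in>K. cinner (e i) z *s e i)" by (simp add: w_def)
    moreover have "(\<Sum>i\<in>K. cinner (e i) z *s e i) \<in> vec.span (e ` K)"
      by (intro vec.span_sum vec.span_scale vec.span_base) auto
    ultimately show False using z by simp
  qed
  moreover have "\<forall>j\<in>K. cinner (e j) w = 0"
  proof
    fix j assume j: "j \<in> K"
    have "cinner (e j) w = cinner (e j) z - (\<Sum>i\<in>K. cinner (e i) z * cinner (e j) (e i))"
      by (simp add: w_def cinner_diff_right cinner_sum_right cinner_smult_right)
    also have "(\<Sum>i\<in>K. cinner (e i) z * cinner (e j) (e i)) = (\<Sum>i\<in>K. if j = i then cinner (e i) z else 0)"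
      by (rule sum.cong) (use orth j in auto)
    also have "\<dots> = cinner (e j) z" using fin j by simp
    finally show "cinner (e j) w = 0" by simp
  qed
  ultimately show ?thesis by blast
qed

lemma quad_le0: fixes a b :: real assumes "\<forall>t. a*t + b*t^2 \<le> 0" shows "a = 0"
proof (rule ccontr)
  assume a: "a \<noteq> 0"
  define c where "c = 2 * (\<bar>b\<bar> + 1)"
  have c: "c > 0" "c - \<bar>b\<bar> > 0" unfolding c_def by auto
  define t where "t = a / c"
  have 1: "a*t + b*t^2 \<le> 0" using assms by simp
  have 2: "b*t^2 \<ge> -\<bar>b\<bar>*t^2"
    by (rule mult_right_mono) auto
  have 3: "a*t - \<bar>b\<bar>*t^2 = a^2*(c - \<bar>b\<bar>)/c^2"
    unfolding t_def using c(1) by (simp add: power2_eq_square divide_simps) (simp add: algebra_simps)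
  have 4: "a^2*(c - \<bar>b\<bar>)/c^2 > 0" using a c by (intro divide_pos_pos mult_pos_pos) auto
  show False using 1 2 3 4 by linarith
qed

lemma mv_scaleR: "A *v (r *\<^sub>R x) = r *\<^sub>R (A *v (x::complex^'n))"
  unfolding vec_eq_iff matrix_vector_mult_def vector_scaleR_component
  by (simp add: scaleR_conv_of_real sum_distrib_left mult_ac)

lemma mv_smult: "A *v (c *s x) = c *s (A *v (x::complex^'n))"
  by (simp add: vec_eq_iff matrix_vector_mult_def sum_distrib_left mult_ac)
lemma cont_quadform: "continuous_on S (\<lambda>x. Re (cinner x (A *v x)))"
  unfolding cinner_def matrix_vector_mult_def vec_lambda_beta by (intro continuous_intros)

lemma cinner_scaleR_both: "cinner (r *\<^sub>R x) (A *v (r *\<^sub>R x)) = of_real (r^2) * cinner x (A *v x)"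
  by (simp add: mv_scaleR cinner_scaleR_left cinner_scaleR_right power2_eq_square algebra_simps)

lemma new_eig:
  fixes A :: "complex^'n^'n"
  assumes pd: "pos_def_mat A" and fin: "finite K" and card: "card K < CARD('n)"
    and oe: "orthoeig A K e d"
  shows "\<exists>x l. cinner x x = 1 \<and> (\<forall>i\<in>K. cinner (e i) x = 0) \<and> A *v x = complex_of_real l *s x \<and> l > 0"
proof -
  have herm: "hermitian_mat A" and pos: "\<And>x. x \<noteq> 0 \<Longrightarrow> Re (cinner x (A *v x)) > 0"
    using pd by (auto simp: pos_def_mat_def)
  have orth: "\<forall>i\<in>K. \<forall>j\<in>K. cinner (e i) (e j) = (if i = j then 1 else 0)"
    and eig: "\<And>i. i \<in> K \<Longrightarrow> A *v e i = complex_of_real (d i) *s e i"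
    using oe by (auto simp: orthoeig_def)
  define W where "W = {x. \<forall>i\<in>K. cinner (e i) x = 0}"
  have W_add: "x \<in> W \<Longrightarrow> y \<in> W \<Longrightarrow> x + y \<in> W" for x y
    by (simp add: W_def cinner_add_right)
  have W_scaleR: "x \<in> W \<Longrightarrow> r *\<^sub>R x \<in> W" for x r
    by (simp add: W_def cinner_scaleR_right)
  have W_smult: "x \<in> W \<Longrightarrow> c *s x \<in> W" for x c
    by (simp add: W_def cinner_smult_right)
  obtain w where w: "w \<noteq> 0" "w \<in> W"
    using W_nonzero[OF fin card orth] W_def by auto
  define S where "S = sphere 0 1 \<inter> W"
  have "closed W"
  proof -
    have "W = (\<Inter>i\<in>K. {x. cinner (e i) x = 0})" by (auto simp: W_def)
    moreover have "closed {x. cinner (e i) x = 0}" for i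
      using continuous_closed_preimage_constant[OF continuous_cinner_right[of UNIV "e i"]] by simp
    ultimately show ?thesis by auto
  qed
  then have "compact S" unfolding S_def by (intro compact_Int_closed) auto
  have "(1 / norm w) *\<^sub>R w \<in> S" using w by (simp add: S_def W_scaleR)
  then have "S \<noteq> {}" by auto
  define f where "f x = Re (cinner x (A *v x))" for x
  obtain x where xS: "x \<in> S" and xmax: "\<And>y. y \<in> S \<Longrightarrow> f y \<le> f x"
    using continuous_attains_sup[OF \<open>compact S\<close> \<open>S \<noteq> {}\<close> cont_quadform[of S A]]
    unfolding f_def by blast
  define l where "l = f x"
  have xW: "x \<in> W" and xn: "norm x = 1" using xS by (auto simp: S_def)
  have bound: "f z \<le> l * (norm z)^2" if "z \<in> W" for z
  proof (cases "z = 0")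
    case True then show ?thesis by (simp add: f_def)
  next
    case False
    then have nz: "norm z > 0" by simp
    have "(1 / norm z) *\<^sub>R z \<in> S" using that False by (simp add: S_def W_scaleR)
    then have "f ((1 / norm z) *\<^sub>R z) \<le> l" using xmax l_def by blast
    moreover have "f ((1 / norm z) *\<^sub>R z) = f z / (norm z)^2"
      by (simp add: f_def cinner_scaleR_both power_divide)
    ultimately show ?thesis using nz by (simp add: divide_le_eq mult.commute)
  qed
  define u where "u = A *v x - complex_of_real l *s x"
  have Re0: "Re (cinner y u) = 0" if y: "y \<in> W" for y
  proof -
    have "\<forall>t. (2 * (Re (cinner y (A *v x)) - l * Re (cinner y x))) * t
              + (f y - l * (norm y)^2) * t^2 \<le> 0"
    proof
      fix t :: real
      have zW: "x + t *\<^sub>R y \<in> W" using xW y W_add W_scaleR by blast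
      have e1: "f (x + t *\<^sub>R y) = f x + 2 * t * Re (cinner y (A *v x)) + t^2 * f y"
      proof -
        have "cinner x (A *v y) = cnj (cinner y (A *v x))"
          using herm_cinner[OF herm, of x y] cinner_commute by metis
        then have "Re (cinner x (A *v y)) = Re (cinner y (A *v x))" by simp
        then show ?thesis
          by (simp add: f_def matrix_vector_right_distrib mv_scaleR cinner_add_left cinner_add_right
              cinner_scaleR_left cinner_scaleR_right power2_eq_square algebra_simps)
      qed
      have e2: "(norm (x + t *\<^sub>R y))^2 = 1 + 2 * t * Re (cinner y x) + t^2 * (norm y)^2"
      proof -
        have "cinner x y = cnj (cinner y x)" by (rule cinner_commute)
        then have "Re (cinner x y) = Re (cinner y x)" by simp
        have "(norm (x + t *\<^sub>R y))^2 = Re (cinner (x + t *\<^sub>R y) (x + t *\<^sub>R y))"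
          by (rule Re_cinner_self[symmetric])
        also have "\<dots> = Re (cinner x x) + t * Re (cinner x y) + t * Re (cinner y x) + t^2 * Re (cinner y y)"
          by (simp add: cinner_add_left cinner_add_right cinner_scaleR_left cinner_scaleR_right power2_eq_square algebra_simps)
        finally show ?thesis using xn \<open>Re (cinner x y) = Re (cinner y x)\<close> by (simp add: Re_cinner_self)
      qed
      have "f (x + t *\<^sub>R y) \<le> l * (norm (x + t *\<^sub>R y))^2" using bound zW by blast
      then show "(2 * (Re (cinner y (A *v x)) - l * Re (cinner y x))) * t
              + (f y - l * (norm y)^2) * t^2 \<le> 0"
        unfolding e1 e2 l_def by (simp add: algebra_simps)
    qed
    from quad_le0[OF this] show ?thesis
      by (simp add: u_def cinner_diff_right cinner_smult_right)
  qed
  have c0: "cinner y u = 0" if y: "y \<in> W" for y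
  proof -
    have "Re (cinner ((\<i>) *s y) u) = 0" using Re0 W_smult y by blast
    then have "Im (cinner y u) = 0" by (simp add: cinner_smult_left)
    with Re0[OF y] show ?thesis by (simp add: complex_eq_iff)
  qed
  have uW: "u \<in> W"
    unfolding W_def mem_Collect_eq
  proof (intro ballI)
    fix i assume i: "i \<in> K"
    have "cinner (e i) (A *v x) = cinner (A *v e i) x" by (rule herm_cinner[OF herm])
    also have "\<dots> = 0" using eig[OF i] xW i by (simp add: cinner_smult_left W_def)
    finally show "cinner (e i) u = 0" using xW i by (simp add: u_def W_def cinner_diff_right cinner_smult_right)
  qed
  have "u = 0" using c0[OF uW] by simp
  then have Ax: "A *v x = complex_of_real l *s x" by (simp add: u_def)
  have "x \<noteq> 0" using xn by auto
  then have "l > 0" using pos l_def f_def by simp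
  moreover have "cinner x x = 1" using xn by (simp add: cinner_self_norm)
  ultimately show ?thesis using Ax xW W_def by blast
qed

lemma eig_family:
  fixes A :: "complex^'n^'n"
  assumes pd: "pos_def_mat A" and fin: "finite K"
  shows "\<exists>e d. orthoeig A K e d"
  using fin
proof (induction K rule: finite_induct)
  case empty then show ?case by (simp add: orthoeig_def)
next
  case (insert a K)
  then obtain e d where oe: "orthoeig A K e d" by blast
  have "K \<subset> UNIV" using insert.hyps by auto
  then have "card K < CARD('n)" by (simp add: psubset_card_mono)
  from new_eig[OF pd insert.hyps(1) this oe] obtain x l where
    x: "cinner x x = 1" "\<forall>i\<in>K. cinner (e i) x = 0" "A *v x = complex_of_real l *s x" "l > 0" by blast
  have x2: "\<forall>i\<in>K. cinner x (e i) = 0" using x(2) by (metis cinner_commute complex_cnj_zero)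
  have "orthoeig A (insert a K) (e(a := x)) (d(a := l))"
    using oe x x2 insert.hyps(2) unfolding orthoeig_def by auto
  then show ?case by blast
qed

lemma spectral_exists:
  fixes A :: "complex^'n^'n"
  assumes pd: "pos_def_mat A"
  shows "\<exists>U d. unitary_mat U \<and> (\<forall>i. d i > 0) \<and> A = U ** diag_real d ** cmat_adj U"
proof -
  obtain e d where oe: "orthoeig A UNIV e d" using eig_family[OF pd, of UNIV] by auto
  define U :: "complex^'n^'n" where "U = (\<chi> i j. e j $ i)"
  have orth: "\<And>i j. cinner (e i) (e j) = (if i = j then 1 else 0)"
    and eig: "\<And>i. A *v e i = complex_of_real (d i) *s e i" and dpos: "\<And>i. d i > 0"
    using oe unfolding orthoeig_def by auto
  have un: "cmat_adj U ** U = mat 1"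
  proof -
    have "(cmat_adj U ** U) $ i $ j = cinner (e i) (e j)" for i j
      unfolding U_def cmat_adj_def matrix_matrix_mult_def cinner_def vec_lambda_beta ..
    then have "(cmat_adj U ** U) $ i $ j = mat 1 $ i $ j" for i j
      unfolding orth mat_def vec_lambda_beta by simp
    then show ?thesis unfolding vec_eq_iff by blast
  qed
  then have un2: "U ** cmat_adj U = mat 1" using matrix_left_right_inverse by blast
  have AU: "A ** U = U ** diag_real d"
  proof -
    have 1: "(A ** U) $ i $ j = (A *v e j) $ i" for i j
      unfolding U_def matrix_matrix_mult_def matrix_vector_mult_def vec_lambda_beta ..
    have 2: "(U ** diag_real d) $ i $ j = complex_of_real (d j) * e j $ i" for i j
    proof -
      have "(U ** diag_real d) $ i $ j = (\<Sum>k\<in>UNIV. e k $ i * (if k = j then complex_of_real (d k) else 0))"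
        unfolding U_def matrix_matrix_mult_def diag_real_def vec_lambda_beta by (rule sum.cong) auto
      also have "\<dots> = (\<Sum>k\<in>UNIV. if k = j then e k $ i * complex_of_real (d k) else 0)"
        by (rule sum.cong) auto
      also have "\<dots> = complex_of_real (d j) * e j $ i"
        by (simp add: mult.commute)
      finally show ?thesis .
    qed
    have "(A ** U) $ i $ j = (U ** diag_real d) $ i $ j" for i j
      unfolding 1 2 eig vector_smult_component ..
    then show ?thesis unfolding vec_eq_iff by blast
  qed
  have "A = A ** (U ** cmat_adj U)" unfolding un2 by (rule matrix_mul_rid[symmetric])
  also have "\<dots> = (A ** U) ** cmat_adj U" by (rule matrix_mul_assoc)
  also have "\<dots> = U ** diag_real d ** cmat_adj U" unfolding AU ..
  finally have "A = U ** diag_real d ** cmat_adj U" .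
  moreover have "unitary_mat U" using un unfolding unitary_mat_def .
  ultimately show ?thesis using dpos by blast
qed

lemma core_scalar:
  fixes w mu :: complex and g n2 h th :: real and m :: nat
  assumes w: "cmod w \<le> 1" and th: "1/2 < th" "th \<le> 1" and h: "h > 0" and g: "g > 0"
    and n2: "n2 > 0" and mu: "cmod mu < n2"
    and eq: "(1 - w) * of_real g + of_real h * (of_real th + of_real (1-th) * w) * of_real n2
             = of_real h * w^m * (of_real th + of_real (1-th) * w) * mu"
  shows False
proof -
  define c where "c = complex_of_real th + complex_of_real (1-th) * w"
  have "\<bar>Re w\<bar> \<le> 1" using abs_Re_le_cmod[of w] w by linarith
  then have "-1 \<le> Re w" by linarith
  then have "-(1-th) \<le> (1-th) * Re w" using mult_left_mono[of "-1" "Re w" "1-th"] th by simp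
  moreover have "Re c = th + (1-th) * Re w" by (simp add: c_def)
  ultimately have "Re c > 0" using th by linarith
  then have cnz: "c \<noteq> 0" by auto
  have R: "Re ((1 - w) / c) \<ge> 0"
  proof -
    define a where "a = Re w"
    define b where "b = Im w"
    have ab: "a^2 + b^2 \<le> 1" using w unfolding a_def b_def cmod_power2[symmetric]
      by (simp add: power_le_one)
    have a1: "a \<le> 1" using \<open>\<bar>Re w\<bar> \<le> 1\<close> a_def by simp
    have num: "Re (1 - w) * Re c + Im (1 - w) * Im c = (1-a)*(th + (1-th)*a) - (1-th)*b^2"
      by (simp add: c_def a_def b_def power2_eq_square algebra_simps)
    have "(1-th)*b^2 \<le> (1-th)*(1-a^2)" using ab th by (intro mult_left_mono) auto
    moreover have "(1-a)*(th + (1-th)*a) - (1-th)*(1-a^2) = (1-a)*(2*th-1)"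
      by (simp add: power2_eq_square algebra_simps)
    moreover have "(1-a)*(2*th-1) \<ge> 0" using a1 th by simp
    ultimately have "Re (1 - w) * Re c + Im (1 - w) * Im c \<ge> 0" unfolding num by linarith
    then show ?thesis unfolding Re_divide by simp
  qed
  have eq2: "(1 - w) / c * of_real g = of_real h * w^m * mu - of_real (h * n2)"
  proof -
    have "(1 - w) * of_real g = c * (of_real h * w^m * mu - of_real (h * n2))"
      using eq unfolding c_def by (simp add: algebra_simps)
    then show ?thesis using cnz by (simp add: field_simps)
  qed
  have "Re ((1 - w) / c * of_real g) = Re ((1 - w) / c) * g" by (simp only: times_complex.sel Re_complex_of_real Im_complex_of_real mult_zero_right diff_zero)
  also have "\<dots> \<ge> 0" using R g by simp
  finally have "Re (of_real h * w^m * mu - of_real (h * n2)) \<ge> 0" unfolding eq2 .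
  then have L: "Re (of_real h * w^m * mu) \<ge> h * n2" by simp
  have "Re (of_real h * w^m * mu) \<le> cmod (of_real h * w^m * mu)" by (rule complex_Re_le_cmod)
  also have "\<dots> = h * cmod w ^ m * cmod mu" using h by (simp add: norm_mult norm_power)
  also have "\<dots> \<le> h * cmod mu"
  proof -
    have "cmod w ^ m \<le> 1" using w by (simp add: power_le_one)
    then show ?thesis using h by (simp add: mult_left_le_one_le mult.assoc mult_left_mono)
  qed
  also have "\<dots> < h * n2" using h mu by simp
  finally have "Re (of_real h * w^m * mu) < h * n2" .
  then show False using L by simp
qed

definition Ms :: "complex^'n^'n \<Rightarrow> ('n \<Rightarrow> real) \<Rightarrow> real \<Rightarrow> complex^'n^'n" where
  "Ms U d a = U ** diag_real (\<lambda>i. d i powr a) ** cmat_adj U"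

lemma mult_diag_right: "(M ** diag_real f) $ i $ j = M $ i $ j * complex_of_real (f j)"
proof -
  have "(M ** diag_real f) $ i $ j = (\<Sum>k\<in>UNIV. if k = j then M $ i $ k * complex_of_real (f k) else 0)"
    unfolding matrix_matrix_mult_def diag_real_def vec_lambda_beta by (rule sum.cong) auto
  then show ?thesis by simp
qed

lemma mult_diag_left: "(diag_real f ** M) $ i $ j = complex_of_real (f i) * M $ i $ j"
proof -
  have "(diag_real f ** M) $ i $ j = (\<Sum>k\<in>UNIV. if k = i then complex_of_real (f k) * M $ k $ j else 0)"
    unfolding matrix_matrix_mult_def diag_real_def vec_lambda_beta by (rule sum.cong) auto
  then show ?thesis by simp
qed

lemma diag_mult: "diag_real f ** diag_real g = diag_real (\<lambda>i. f i * g i)"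
  unfolding vec_eq_iff mult_diag_right by (simp add: diag_real_def)

lemma diag_one: "diag_real (\<lambda>i. 1) = mat 1"
  by (simp add: diag_real_def mat_def vec_eq_iff)

lemma unitary_right: "unitary_mat U \<Longrightarrow> U ** cmat_adj U = mat 1"
  unfolding unitary_mat_def using matrix_left_right_inverse by blast

lemma Ms_mult:
  assumes U: "unitary_mat U" and d: "\<forall>i. d i > 0"
  shows "Ms U d a ** Ms U d b = Ms U d (a + b)"
proof -
  have "Ms U d a ** Ms U d b =
     U ** (diag_real (\<lambda>i. d i powr a) ** ((cmat_adj U ** U) ** diag_real (\<lambda>i. d i powr b))) ** cmat_adj U"
    unfolding Ms_def by (simp add: matrix_mul_assoc)
  also have "\<dots> = U ** diag_real (\<lambda>i. d i powr (a + b)) ** cmat_adj U"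
    using U d unfolding unitary_mat_def by (simp add: diag_mult powr_add)
  finally show ?thesis unfolding Ms_def .
qed

lemma Ms_0:
  assumes U: "unitary_mat U" and d: "\<forall>i. d i > 0"
  shows "Ms U d 0 = mat 1"
proof -
  have "(\<lambda>i. d i powr 0) = (\<lambda>i. 1)"
  proof (rule ext)
    fix i have "d i > 0" using d by blast
    then show "d i powr 0 = 1" by simp
  qed
  then show ?thesis unfolding Ms_def using unitary_right[OF U] by (simp add: diag_one)
qed

lemma Ms_1:
  assumes d: "\<forall>i. d i > 0"
  shows "Ms U d 1 = U ** diag_real d ** cmat_adj U"
proof -
  have "(\<lambda>i. d i powr 1) = d"
  proof (rule ext)
    fix i have "d i > 0" using d by blast
    then show "d i powr 1 = d i" by simp
  qed
  then show ?thesis unfolding Ms_def by simp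
qed

lemma Ms_unique:
  assumes U: "unitary_mat U" and V: "unitary_mat V" and d: "\<forall>i. d i > 0" and e: "\<forall>i. e i > 0"
    and eq: "U ** diag_real d ** cmat_adj U = V ** diag_real e ** cmat_adj V"
  shows "Ms U d s = Ms V e s"
proof -
  have UU: "cmat_adj U ** U = mat 1" and VV: "cmat_adj V ** V = mat 1" using U V unfolding unitary_mat_def by auto
  have UU2: "U ** cmat_adj U = mat 1" and VV2: "V ** cmat_adj V = mat 1" using U V unitary_right by auto
  define W where "W = cmat_adj V ** U"
  have "cmat_adj V ** (U ** diag_real d ** cmat_adj U) ** U = cmat_adj V ** (V ** diag_real e ** cmat_adj V) ** U"
    using eq by simp
  moreover have "cmat_adj V ** (U ** diag_real d ** cmat_adj U) ** U = W ** diag_real d ** (cmat_adj U ** U)"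
    unfolding W_def by (simp add: matrix_mul_assoc)
  moreover have "cmat_adj V ** (V ** diag_real e ** cmat_adj V) ** U = (cmat_adj V ** V) ** diag_real e ** W"
    unfolding W_def by (simp add: matrix_mul_assoc)
  ultimately have WD: "W ** diag_real d = diag_real e ** W" using UU VV by simp
  have "W $ i $ j * complex_of_real (d j) = complex_of_real (e i) * W $ i $ j" for i j
    using WD unfolding vec_eq_iff mult_diag_right mult_diag_left by blast
  then have "W $ i $ j = 0 \<or> d j = e i" for i j
    by (metis mult.commute mult_cancel_left of_real_eq_iff)
  then have "W $ i $ j * complex_of_real (d j powr s) = complex_of_real (e i powr s) * W $ i $ j" for i j
    by (metis mult.commute mult_zero_left mult_zero_right)
  then have WDs: "W ** diag_real (\<lambda>i. d i powr s) = diag_real (\<lambda>i. e i powr s) ** W"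
    unfolding vec_eq_iff mult_diag_right mult_diag_left by blast
  have "Ms U d s = (V ** cmat_adj V) ** U ** diag_real (\<lambda>i. d i powr s) ** cmat_adj U"
    unfolding Ms_def VV2 by simp
  also have "\<dots> = V ** (W ** diag_real (\<lambda>i. d i powr s)) ** cmat_adj U"
    unfolding W_def by (simp add: matrix_mul_assoc)
  also have "\<dots> = V ** diag_real (\<lambda>i. e i powr s) ** (W ** cmat_adj U)"
    unfolding WDs by (simp add: matrix_mul_assoc)
  also have "W ** cmat_adj U = cmat_adj V"
    unfolding W_def by (simp add: matrix_mul_assoc[symmetric] UU2)
  finally show ?thesis unfolding Ms_def .
qed

lemma mat_powr_eq:
  assumes U: "unitary_mat U" and d: "\<forall>i. d i > 0" and A: "A = U ** diag_real d ** cmat_adj U"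
  shows "mat_powr A s = Ms U d s"
proof -
  let ?P = "\<lambda>M. \<exists>U d. unitary_mat U \<and> (\<forall>i. d i > 0) \<and>
      A = U ** diag_real d ** cmat_adj U \<and> M = U ** diag_real (\<lambda>i. d i powr s) ** cmat_adj U"
  have "?P (Ms U d s)" using U d A unfolding Ms_def by blast
  then have "?P (mat_powr A s)" unfolding mat_powr_def by (rule someI)
  then obtain V e where V: "unitary_mat V" "\<forall>i. e i > 0" "A = V ** diag_real e ** cmat_adj V"
    and M: "mat_powr A s = V ** diag_real (\<lambda>i. e i powr s) ** cmat_adj V" by blast
  have "Ms V e s = Ms U d s" using Ms_unique[OF V(1) U V(2) d] V(3) A by simp
  then show ?thesis using M unfolding Ms_def by simp
qed

lemma cinner_diag: "cinner y (diag_real f *v y) = of_real (\<Sum>i\<in>UNIV. f i * (cmod (y $ i))\<^sup>2)"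
proof -
  have "(diag_real f *v y) $ i = complex_of_real (f i) * y $ i" for i
  proof -
    have "(diag_real f *v y) $ i = (\<Sum>k\<in>UNIV. if k = i then complex_of_real (f k) * y $ k else 0)"
      unfolding matrix_vector_mult_def diag_real_def vec_lambda_beta by (rule sum.cong) auto
    then show ?thesis by simp
  qed
  then have "cinner y (diag_real f *v y) = (\<Sum>i\<in>UNIV. complex_of_real (f i) * (cnj (y $ i) * y $ i))"
    unfolding cinner_def by (simp add: mult_ac)
  also have "\<dots> = (\<Sum>i\<in>UNIV. complex_of_real (f i * (cmod (y $ i))\<^sup>2))"
  proof (rule sum.cong)
    fix i
    have "complex_of_real ((cmod (y $ i))\<^sup>2) = y $ i * cnj (y $ i)" by (rule complex_norm_square)
    then show "complex_of_real (f i) * (cnj (y $ i) * y $ i) = complex_of_real (f i * (cmod (y $ i))\<^sup>2)"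
      by (simp add: mult.commute)
  qed simp
  finally show ?thesis by simp
qed

lemma Ms_pos:
  assumes U: "unitary_mat U" and d: "\<forall>i. d i > 0" and x: "x \<noteq> 0"
  shows "\<exists>g. g > 0 \<and> cinner x (Ms U d a *v x) = complex_of_real g"
proof -
  define y where "y = cmat_adj U *v x"
  have "U *v y = x" unfolding y_def matrix_vector_mul_assoc unitary_right[OF U] by simp
  then have "y \<noteq> 0" using x by auto
  then obtain k where k: "y $ k \<noteq> 0" by (auto simp: vec_eq_iff)
  have "cinner x (Ms U d a *v x) = cinner y (diag_real (\<lambda>i. d i powr a) *v y)"
    unfolding Ms_def y_def by (simp add: matrix_vector_mul_assoc[symmetric] cinner_adj)
  also have "\<dots> = of_real (\<Sum>i\<in>UNIV. d i powr a * (cmod (y $ i))\<^sup>2)" by (rule cinner_diag)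
  finally have eq: "cinner x (Ms U d a *v x) = of_real (\<Sum>i\<in>UNIV. d i powr a * (cmod (y $ i))\<^sup>2)" .
  have "(\<Sum>i\<in>UNIV. d i powr a * (cmod (y $ i))\<^sup>2) \<ge> d k powr a * (cmod (y $ k))\<^sup>2"
    by (rule member_le_sum) (use d in auto)
  moreover have "d k powr a * (cmod (y $ k))\<^sup>2 > 0"
  proof -
    have "d k > 0" using d by blast
    then show ?thesis using k by (intro mult_pos_pos) auto
  qed
  ultimately show ?thesis using eq by (intro exI[of _ "\<Sum>i\<in>UNIV. d i powr a * (cmod (y $ i))\<^sup>2"]) auto
qed

lemma core_vec:
  fixes A B :: "complex^'n^'n" and v :: "complex^'n" and w :: complex and th h p :: real and m :: nat
  assumes pd: "pos_def_mat A" and th: "1/2 < th" "th \<le> 1" and h: "h > 0" and w: "cmod w \<le> 1"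
    and F: "field_of_values (mat_powr A (p/2 - 1) ** B ** mat_powr A (- p/2)) \<subseteq> ball 0 1"
    and eq: "(1 - w) *s v + (of_real h * (of_real th + of_real (1-th) * w)) *s (A *v v)
             = (of_real h * w^m * (of_real th + of_real (1-th) * w)) *s (B *v v)"
  shows "v = 0"
proof (rule ccontr)
  assume vnz: "v \<noteq> 0"
  obtain U d where U: "unitary_mat U" and d: "\<forall>i. d i > 0" and A: "A = U ** diag_real d ** cmat_adj U"
    using spectral_exists[OF pd] by blast
  have mp: "mat_powr A a = Ms U d a" for a by (rule mat_powr_eq[OF U d A])
  have MM: "Ms U d a ** Ms U d b = Ms U d (a + b)" for a b by (rule Ms_mult[OF U d])
  define t where "t = - p/2"
  define s where "s = p/2 - 1"
  define P where "P = Ms U d s"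
  define Q where "Q = Ms U d t"
  define M where "M = P ** B ** Q"
  define k where "k = of_real h * (of_real th + of_real (1-th) * w)"
  define k' where "k' = of_real h * w^m * (of_real th + of_real (1-th) * w)"
  have FM: "field_of_values M \<subseteq> ball 0 1" using F unfolding M_def P_def Q_def s_def t_def mp .
  define x where "x = Ms U d (-t) *v v"
  have vx: "v = Q *v x"
    unfolding x_def Q_def matrix_vector_mul_assoc MM using Ms_0[OF U d] by simp
  have xnz: "x \<noteq> 0" using vnz vx by auto
  have Pv: "P *v v = Ms U d (-1) *v x"
    unfolding vx P_def Q_def matrix_vector_mul_assoc MM s_def t_def by simp
  have PAv: "P *v (A *v v) = x"
  proof -
    have "A = Ms U d 1" using Ms_1[OF d] A by simp
    then have "P *v (A *v v) = (Ms U d s ** Ms U d 1 ** Ms U d t) *v x"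
      unfolding vx P_def Q_def matrix_vector_mul_assoc by (simp add: matrix_mul_assoc)
    also have "\<dots> = Ms U d 0 *v x" unfolding MM s_def t_def by simp
    finally show ?thesis using Ms_0[OF U d] by simp
  qed
  have PBv: "P *v (B *v v) = M *v x"
    unfolding vx M_def matrix_vector_mul_assoc by (simp add: matrix_mul_assoc)
  have "P *v ((1 - w) *s v + k *s (A *v v)) = P *v (k' *s (B *v v))"
    using eq unfolding k_def k'_def by simp
  then have eqP: "(1 - w) *s (Ms U d (-1) *v x) + k *s x = k' *s (M *v x)"
    unfolding matrix_vector_right_distrib mv_smult Pv PAv PBv .
  obtain g where g: "g > 0" "cinner x (Ms U d (-1) *v x) = complex_of_real g"
    using Ms_pos[OF U d xnz] by blast
  define n2 where "n2 = (norm x)^2"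
  have n2: "n2 > 0" using xnz unfolding n2_def by simp
  have xx: "cinner x x = complex_of_real n2" unfolding n2_def by (rule cinner_self_norm)
  define mu where "mu = cinner x (M *v x)"
  have mu: "cmod mu < n2"
  proof -
    define x' where "x' = (1 / norm x) *\<^sub>R x"
    have "cinner x' x' = complex_of_real ((1 / norm x)^2 * (norm x)^2)"
      unfolding x'_def by (simp add: cinner_scaleR_left cinner_scaleR_right cinner_self_norm power2_eq_square)
    also have "(1 / norm x)^2 * (norm x)^2 = 1" using xnz by (simp add: power_divide)
    then have "complex_of_real ((1 / norm x)^2 * (norm x)^2) = 1" by simp
    finally have "cinner x' (M *v x') \<in> field_of_values M" unfolding field_of_values_def by blast
    then have "cmod (cinner x' (M *v x')) < 1" using FM by (auto simp: dist_norm)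
    moreover have "cinner x' (M *v x') = complex_of_real ((1 / norm x)^2) * mu"
      unfolding x'_def mu_def by (rule cinner_scaleR_both)
    moreover have "cmod (complex_of_real ((1 / norm x)^2) * mu) = (1 / norm x)^2 * cmod mu"
      unfolding norm_mult norm_of_real by simp
    ultimately have "(1 / norm x)^2 * cmod mu < 1" by simp
    then show ?thesis using xnz unfolding n2_def by (simp add: field_simps)
  qed
  have "cinner x ((1 - w) *s (Ms U d (-1) *v x) + k *s x) = cinner x (k' *s (M *v x))"
    using eqP by simp
  then have "(1 - w) * of_real g + k * of_real n2 = k' * mu"
    unfolding cinner_add_right cinner_smult_right g xx mu_def .
  then have "(1 - w) * of_real g + of_real h * (of_real th + of_real (1-th) * w) * of_real n2
             = of_real h * w^m * (of_real th + of_real (1-th) * w) * mu"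
    unfolding k_def k'_def .
  from core_scalar[OF w th h g(1) n2 mu this] show False .
qed

lemma decay_step:
  fixes a b :: "nat \<Rightarrow> complex" and c :: complex
  assumes c: "cmod c < 1" and b: "b \<longlonglongrightarrow> 0" and rec: "\<And>n. a (Suc n) = c * a n + b n"
  shows "a \<longlonglongrightarrow> 0"
proof (rule LIMSEQ_I)
  fix e :: real assume e: "e > 0"
  define r where "r = cmod c"
  have r: "0 \<le> r" "r < 1" using c by (auto simp: r_def)
  have "e * (1 - r) / 2 > 0" using e r by simp
  then obtain N where N: "\<And>n. n \<ge> N \<Longrightarrow> cmod (b n) < e * (1 - r) / 2"
    using LIMSEQ_D[OF b] by fastforce
  define A where "A = cmod (a N)"
  have bound: "cmod (a (N + k)) \<le> r^k * A + e / 2" for k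
  proof (induction k)
    case 0 then show ?case using e by (simp add: A_def)
  next
    case (Suc k)
    have "cmod (a (N + Suc k)) = cmod (c * a (N + k) + b (N + k))" by (simp add: rec)
    also have "\<dots> \<le> r * cmod (a (N + k)) + cmod (b (N + k))"
      unfolding r_def by (metis norm_mult norm_triangle_ineq)
    also have "\<dots> \<le> r * (r^k * A + e / 2) + e * (1 - r) / 2"
      using Suc.IH N[of "N + k"] r by (intro add_mono mult_left_mono) auto
    also have "\<dots> = r^(Suc k) * A + e / 2" by (simp add: field_simps)
    finally show ?case .
  qed
  have "(\<lambda>k. r^k * A) \<longlonglongrightarrow> 0"
    using LIMSEQ_power_zero[of r] r by (intro tendsto_mult_left_zero) auto
  then obtain K where K: "\<And>k. k \<ge> K \<Longrightarrow> norm (r^k * A) < e / 2"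
    using LIMSEQ_D[of _ 0 "e/2"] e by fastforce
  show "\<exists>no. \<forall>n\<ge>no. norm (a n - 0) < e"
  proof (intro exI allI impI)
    fix n assume n: "n \<ge> N + K"
    define k where "k = n - N"
    have nk: "n = N + k" and kK: "k \<ge> K" using n by (auto simp: k_def)
    have "r^k * A < e / 2" using K[OF kK] by simp
    then show "norm (a n - 0) < e" using bound[of k] nk by simp
  qed
qed

definition fin_fps :: "complex fps \<Rightarrow> bool" where
  "fin_fps F \<longleftrightarrow> (\<exists>K. \<forall>n>K. fps_nth F n = 0)"

lemma decay_poly:
  fixes q :: "complex poly" and F :: "complex fps"
  assumes "\<And>w. cmod w \<le> 1 \<Longrightarrow> poly q w \<noteq> 0" and "fin_fps (fps_of_poly q * F)"
  shows "(\<lambda>n. fps_nth F n) \<longlonglongrightarrow> 0"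
  using assms
proof (induction "degree q" arbitrary: q F rule: less_induct)
  case less
  show ?case
  proof (cases "degree q = 0")
    case True
    then obtain c where qc: "q = [:c:]" by (metis degree_eq_zeroE)
    have "c \<noteq> 0" using less.prems(1)[of 0] qc by simp
    obtain K where K: "\<And>n. n > K \<Longrightarrow> fps_nth (fps_of_poly q * F) n = 0"
      using less.prems(2) unfolding fin_fps_def by blast
    have "fps_nth F n = 0" if "n > K" for n
      using K[OF that] \<open>c \<noteq> 0\<close> qc by (simp add: fps_of_poly_pCons fps_mult_left_const_nth)
    then have "eventually (\<lambda>n. fps_nth F n = 0) sequentially"
      by (metis (mono_tags) eventually_sequentiallyI Suc_le_eq)
    then show ?thesis by (rule tendsto_eventually)
  next
    case False
    then have "\<not> constant (poly q)" by (simp add: constant_degree)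
    then obtain w0 where w0: "poly q w0 = 0" using fundamental_theorem_of_algebra by blast
    then have w0gt: "cmod w0 > 1" using less.prems(1) by force
    then have w0nz: "w0 \<noteq> 0" by auto
    from w0 obtain q' where qq: "q = [:-w0, 1:] * q'" by (metis dvdE poly_eq_0_iff_dvd)
    have "q' \<noteq> 0" using qq False by auto
    have "degree q = degree [:-w0, 1:] + degree q'" unfolding qq
      by (rule degree_mult_eq) (use \<open>q' \<noteq> 0\<close> in auto)
    then have degq': "degree q' < degree q" by simp
    have q'roots: "poly q' w \<noteq> 0" if "cmod w \<le> 1" for w
      using less.prems(1)[OF that] qq by auto
    define G where "G = fps_of_poly [:-w0, 1:] * F"
    have "fps_of_poly q' * G = fps_of_poly q * F"
      unfolding G_def qq fps_of_poly_mult by (simp add: mult_ac)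
    then have "fin_fps (fps_of_poly q' * G)" using less.prems(2) by simp
    from less.hyps[OF degq' q'roots this] have Gt: "(\<lambda>n. fps_nth G n) \<longlonglongrightarrow> 0" .
    have Gn: "fps_nth G (Suc n) = - w0 * fps_nth F (Suc n) + fps_nth F n" for n
    proof -
      have e: "fps_of_poly [:-w0, 1:] = fps_const (-w0) + fps_X"
        by (simp add: fps_of_poly_pCons)
      have "G = fps_const (-w0) * F + fps_X * F" unfolding G_def e by (rule distrib_right)
      then show ?thesis by (simp add: fps_mult_left_const_nth fps_X_mult_nth)
    qed
    have rec: "fps_nth F (Suc n) = (1 / w0) * fps_nth F n + (- fps_nth G (Suc n) / w0)" for n
    proof -
      have "fps_nth F n = fps_nth G (Suc n) + w0 * fps_nth F (Suc n)" using Gn[of n] by simp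
      then show ?thesis using w0nz by (simp add: divide_simps)
    qed
    have "(\<lambda>n. - fps_nth G (Suc n) / w0) \<longlonglongrightarrow> - 0 / w0"
      using LIMSEQ_Suc[OF Gt] w0nz by (intro tendsto_intros) auto
    then have b: "(\<lambda>n. - fps_nth G (Suc n) / w0) \<longlonglongrightarrow> 0" by simp
    have "cmod (1 / w0) < 1" using w0gt by (simp add: norm_divide divide_less_eq)
    from decay_step[OF this b rec] show ?thesis .
  qed
qed

lemma hom_sum:
  fixes f :: "'a::comm_ring_1 \<Rightarrow> 'b::comm_ring_1"
  assumes add: "\<And>a b. f (a + b) = f a + f b" and z: "f 0 = 0"
  shows "f (sum g S) = (\<Sum>x\<in>S. f (g x))"
  by (induction S rule: infinite_finite_induct) (auto simp: add z)

lemma hom_prod: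
  fixes f :: "'a::comm_ring_1 \<Rightarrow> 'b::comm_ring_1"
  assumes mult: "\<And>a b. f (a * b) = f a * f b" and o: "f 1 = 1"
  shows "f (prod g S) = (\<Prod>x\<in>S. f (g x))"
  by (induction S rule: infinite_finite_induct) (auto simp: mult o)

lemma det_hom:
  fixes f :: "'a::comm_ring_1 \<Rightarrow> 'b::comm_ring_1" and M :: "'a^'n^'n"
  assumes add: "\<And>a b. f (a + b) = f a + f b" and mult: "\<And>a b. f (a * b) = f a * f b"
    and z: "f 0 = 0" and o: "f 1 = 1" and neg: "\<And>a. f (- a) = - f a"
  shows "f (det M) = det (\<chi> i j. f (M $ i $ j))"
proof -
  have s: "f (of_int (sign p)) = of_int (sign p)" for p :: "'n \<Rightarrow> 'n"
    by (cases p rule: sign_cases) (simp_all add: o neg)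
  show ?thesis
    unfolding det_def hom_sum[of f, OF add z] mult hom_prod[of f, OF mult o] s by simp
qed

lemma fin_fps_add: "fin_fps F \<Longrightarrow> fin_fps G \<Longrightarrow> fin_fps (F + G)"
  unfolding fin_fps_def by (metis fps_add_nth add_0 max.strict_boundedE less_max_iff_disj)

lemma fin_fps_uminus: "fin_fps F \<Longrightarrow> fin_fps (- F)"
  unfolding fin_fps_def by simp

lemma fin_fps_mult:
  assumes "fin_fps F" "fin_fps G" shows "fin_fps (F * G)"
proof -
  obtain K1 where K1: "\<And>n. n > K1 \<Longrightarrow> fps_nth F n = 0" using assms(1) unfolding fin_fps_def by blast
  obtain K2 where K2: "\<And>n. n > K2 \<Longrightarrow> fps_nth G n = 0" using assms(2) unfolding fin_fps_def by blast
  have "fps_nth (F * G) n = 0" if n: "n > K1 + K2" for n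
    unfolding fps_mult_nth
  proof (rule sum.neutral, rule ballI)
    fix i assume "i \<in> {0..n}"
    show "fps_nth F i * fps_nth G (n - i) = 0"
    proof (cases "i > K1")
      case True then show ?thesis using K1 by simp
    next
      case False then have "n - i > K2" using n by linarith
      then show ?thesis using K2 by simp
    qed
  qed
  then show ?thesis unfolding fin_fps_def by blast
qed

lemma fin_fps_of_poly: "fin_fps (fps_of_poly p)"
  unfolding fin_fps_def by (auto intro!: exI[of _ "degree p"] coeff_eq_0)

lemma fin_fps_one: "fin_fps 1"
  using fin_fps_of_poly[of 1] by simp

lemma fin_fps_zero: "fin_fps 0"
  using fin_fps_of_poly[of 0] by simp

lemma fin_fps_sum: "(\<And>x. x \<in> S \<Longrightarrow> fin_fps (g x)) \<Longrightarrow> fin_fps (sum g S)"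
  by (induction S rule: infinite_finite_induct) (auto intro: fin_fps_add fin_fps_zero)

lemma fin_fps_prod: "(\<And>x. x \<in> S \<Longrightarrow> fin_fps (g x)) \<Longrightarrow> fin_fps (prod g S)"
  by (induction S rule: infinite_finite_induct) (auto intro: fin_fps_mult fin_fps_one)

lemma fin_fps_of_int: "fin_fps (of_int k)"
proof -
  have "(of_int k :: complex fps) = fps_of_poly [:of_int k:]" by (simp add: fps_of_int fps_of_poly_pCons)
  then show ?thesis using fin_fps_of_poly by metis
qed

lemma fin_fps_det:
  fixes C :: "complex fps^'n^'n"
  assumes "\<And>i j. fin_fps (C $ i $ j)"
  shows "fin_fps (det C)"
  unfolding det_def
  by (intro fin_fps_sum fin_fps_mult fin_fps_prod fin_fps_of_int assms)

lemma gen_decay: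
  fixes Lr :: "nat \<Rightarrow> complex^'n^'n" and x :: "nat \<Rightarrow> complex^'n" and D :: nat
  assumes rec: "\<And>n. n \<ge> D \<Longrightarrow> (\<Sum>l\<le>D. Lr l *v x (n - l)) = 0"
    and roots: "\<And>w. cmod w \<le> 1 \<Longrightarrow> det (\<chi> i j. \<Sum>l\<le>D. w^l * Lr l $ i $ j) \<noteq> 0"
  shows "(\<lambda>n. x n $ k) \<longlonglongrightarrow> 0"
proof -
  define Rp :: "complex poly^'n^'n" where "Rp = (\<chi> i j. \<Sum>l\<le>D. monom (Lr l $ i $ j) l)"
  define dp where "dp = det Rp"
  have coeffR: "coeff (Rp $ i $ j) l = (if l \<le> D then Lr l $ i $ j else 0)" for i j l
  proof -
    have "coeff (Rp $ i $ j) l = (\<Sum>l'\<le>D. if l' = l then Lr l' $ i $ j else 0)"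
      unfolding Rp_def vec_lambda_beta coeff_sum coeff_monom by simp
    also have "\<dots> = (if l \<le> D then Lr l $ i $ j else 0)" by (simp add: sum.delta')
    finally show ?thesis .
  qed
  have polyR: "poly (Rp $ i $ j) w = (\<Sum>l\<le>D. w^l * Lr l $ i $ j)" for i j w
    unfolding Rp_def vec_lambda_beta poly_sum poly_monom by (simp add: mult.commute)
  have dproots: "poly dp w \<noteq> 0" if w: "cmod w \<le> 1" for w
  proof -
    have "poly dp w = det (\<chi> i j. poly (Rp $ i $ j) w)"
      unfolding dp_def by (rule det_hom) (simp_all add: poly_add poly_mult)
    also have "\<dots> = det (\<chi> i j. \<Sum>l\<le>D. w^l * Lr l $ i $ j)" unfolding polyR ..
    finally show ?thesis using roots[OF w] by simp
  qed
  define Xf where "Xf j = Abs_fps (\<lambda>n. x n $ j)" for j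
  define Bf where "Bf i = (\<Sum>j\<in>UNIV. fps_of_poly (Rp $ i $ j) * Xf j)" for i
  have finB: "fin_fps (Bf i)" for i
  proof -
    have "fps_nth (Bf i) n = 0" if n: "n > D" for n
    proof -
      have "fps_nth (Bf i) n = (\<Sum>j\<in>UNIV. \<Sum>l\<in>{0..n}. (if l \<in> {..D} then Lr l $ i $ j * x (n - l) $ j else 0))"
        unfolding Bf_def fps_sum_nth fps_mult_nth fps_of_poly_nth coeffR Xf_def fps_nth_Abs_fps
        by (intro sum.cong refl) auto
      also have "\<dots> = (\<Sum>j\<in>UNIV. \<Sum>l\<le>D. Lr l $ i $ j * x (n - l) $ j)"
      proof (rule sum.cong[OF refl])
        fix j
        have fin: "finite {0..n}" by simp
        have eq: "{0..n} \<inter> {..D} = {..D}" using n by auto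
        show "(\<Sum>l\<in>{0..n}. (if l \<in> {..D} then Lr l $ i $ j * x (n - l) $ j else 0))
              = (\<Sum>l\<le>D. Lr l $ i $ j * x (n - l) $ j)"
          unfolding sum.inter_restrict[OF fin, symmetric] eq ..
      qed
      also have "(\<Sum>j\<in>UNIV. \<Sum>l\<le>D. Lr l $ i $ j * x (n - l) $ j) = (\<Sum>l\<le>D. \<Sum>j\<in>UNIV. Lr l $ i $ j * x (n - l) $ j)"
        by (rule sum.swap)
      also have "\<dots> = (\<Sum>l\<le>D. Lr l *v x (n - l)) $ i"
        by (simp add: sum_component matrix_vector_mult_def)
      also have "\<dots> = 0" using rec n by simp
      finally show ?thesis .
    qed
    then show ?thesis unfolding fin_fps_def by blast
  qed
  define RL :: "complex fls^'n^'n" where "RL = (\<chi> i j. fps_to_fls (fps_of_poly (Rp $ i $ j)))"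
  define XL :: "complex fls^'n" where "XL = (\<chi> j. fps_to_fls (Xf j))"
  have RLX: "RL *v XL = (\<chi> i. fps_to_fls (Bf i))"
  proof -
    have "(RL *v XL) $ i = fps_to_fls (Bf i)" for i
      unfolding RL_def XL_def Bf_def matrix_vector_mult_def vec_lambda_beta
      by (simp add: hom_sum[of fps_to_fls] fls_times_fps_to_fls)
    then show ?thesis by (simp add: vec_eq_iff)
  qed
  define C :: "complex fps^'n^'n" where "C = (\<chi> i j. if j = k then Bf i else fps_of_poly (Rp $ i $ j))"
  have "det (\<chi> i j. if j = k then (RL *v XL) $ i else RL $ i $ j) = XL $ k * det RL"
    by (rule cramer_lemma)
  moreover have "(\<chi> i j. if j = k then (RL *v XL) $ i else RL $ i $ j) = (\<chi> i j. fps_to_fls (C $ i $ j))"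
    unfolding RLX unfolding C_def RL_def by (simp add: vec_eq_iff)
  moreover have "det (\<chi> i j. fps_to_fls (C $ i $ j)) = fps_to_fls (det C)"
    by (rule det_hom[symmetric]) (simp_all add: fls_times_fps_to_fls)
  moreover have "det RL = fps_to_fls (fps_of_poly dp)"
    unfolding RL_def dp_def
    by (rule det_hom[symmetric]) (simp_all add: fls_times_fps_to_fls fps_of_poly_add fps_of_poly_mult fps_of_poly_uminus)
  ultimately have "fps_to_fls (det C) = fps_to_fls (Xf k * fps_of_poly dp)"
    unfolding XL_def by (simp add: fls_times_fps_to_fls)
  then have "det C = Xf k * fps_of_poly dp" by simp
  moreover have "fin_fps (det C)"
    by (rule fin_fps_det) (simp add: C_def finB fin_fps_of_poly)
  ultimately have "fin_fps (fps_of_poly dp * Xf k)" by (simp add: mult.commute)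
  from decay_poly[OF dproots this] show ?thesis unfolding Xf_def fps_nth_Abs_fps by simp
qed

lemma mv_scaleR_l: "(r *\<^sub>R M) *v (z::complex^'n) = r *\<^sub>R (M *v z)"
  unfolding vec_eq_iff matrix_vector_mult_def vector_scaleR_component
  by (simp add: scaleR_conv_of_real sum_distrib_left mult_ac)

lemma scaleR_comp: "(r *\<^sub>R (v::complex^'n)) $ i = complex_of_real r * v $ i"
  unfolding vector_scaleR_component by (simp add: scaleR_conv_of_real)

lemma mv_neg_l: "(- M) *v (z::complex^'n) = - (M *v z)"
  by (simp add: vec_eq_iff matrix_vector_mult_def sum_negf)

lemma mv_diff_l: "(M - N) *v (z::complex^'n) = M *v z - N *v z"
  by (simp add: vec_eq_iff matrix_vector_mult_def sum_subtractf left_diff_distrib)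

lemma mv_zero_l: "(0::complex^'n^'n) *v z = 0"
  by (simp add: vec_eq_iff matrix_vector_mult_def)

lemma det_zero_kernel:
  fixes M :: "complex^'n^'n"
  assumes "det M = 0"
  shows "\<exists>v. v \<noteq> 0 \<and> M *v v = 0"
proof -
  have "\<not> bij ((*v) M)" using assms invertible_det_nz invertible_eq_bij by metis
  then have "\<not> inj ((*v) M)"
    using vec.linear_inj_imp_surj[OF matrix_vector_mul_linear_gen] bij_def by metis
  then obtain a b where ab: "a \<noteq> b" "M *v a = M *v b" unfolding inj_def by blast
  have "M *v (a - b) = 0" using ab by (simp add: matrix_vector_mult_diff_distrib)
  moreover have "a - b \<noteq> 0" using ab by simp
  ultimately show ?thesis by blast
qed

theorem mainTheorem3:
  fixes A B :: "complex^'n^'n" and \<tau> \<theta> :: real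
  assumes "\<tau> > 0"
    and "pos_def_mat A"
    and "1/2 < \<theta>" and "\<theta> \<le> 1"
    and "\<exists>p::real. field_of_values (mat_powr A (p/2 - 1) ** B ** mat_powr A (- p/2)) \<subseteq> ball 0 1"
  shows "\<forall>m::nat. m \<ge> 1 \<longrightarrow> theta_stable A B \<theta> 0 m (\<tau> / real m)"
proof (intro allI impI)
  fix m :: nat assume m: "m \<ge> 1"
  obtain p where F: "field_of_values (mat_powr A (p/2 - 1) ** B ** mat_powr A (- p/2)) \<subseteq> ball 0 1"
    using assms(5) by blast
  define h where "h = \<tau> / real m"
  have h: "h > 0" using m assms(1) by (simp add: h_def)
  define th where "th = \<theta>"
  have th: "1/2 < th" "th \<le> 1" using assms(3,4) by (auto simp: th_def)
  define D where "D = m + 1"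
  define Lr :: "nat \<Rightarrow> complex^'n^'n" where
    "Lr l = (if l = 0 then mat 1 + (h*th) *\<^sub>R A else 0) + (if l = 1 then (h*(1-th)) *\<^sub>R A - mat 1 else 0)
          + (if l = m then - ((h*th) *\<^sub>R B) else 0) + (if l = m + 1 then - ((h*(1-th)) *\<^sub>R B) else 0)" for l
  have Lr_apply: "Lr l *v z = (if l = 0 then z + (h*th) *\<^sub>R (A *v z) else 0)
      + (if l = 1 then (h*(1-th)) *\<^sub>R (A *v z) - z else 0)
      + (if l = m then - ((h*th) *\<^sub>R (B *v z)) else 0)
      + (if l = m + 1 then - ((h*(1-th)) *\<^sub>R (B *v z)) else 0)" for l z
    unfolding Lr_def matrix_vector_mult_add_rdistrib
    by (simp add: mv_scaleR_l mv_neg_l mv_diff_l mv_zero_l matrix_vector_mult_add_rdistrib)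
  have roots: "det (\<chi> i j. \<Sum>l\<le>D. w^l * Lr l $ i $ j) \<noteq> 0" if w: "cmod w \<le> 1" for w
  proof
    assume "det (\<chi> i j. \<Sum>l\<le>D. w^l * Lr l $ i $ j) = 0"
    then obtain v where v: "v \<noteq> 0" "(\<chi> i j. \<Sum>l\<le>D. w^l * Lr l $ i $ j) *v v = 0"
      using det_zero_kernel by blast
    have comp: "((\<chi> i j. \<Sum>l\<le>D. w^l * Lr l $ i $ j) *v v) $ i = (\<Sum>l\<le>D. w^l * (Lr l *v v) $ i)" for i
      by (simp add: matrix_vector_mult_def sum_distrib_right sum_distrib_left mult.assoc sum.swap[of _ UNIV])
    have "(\<Sum>l\<le>D. w^l * (Lr l *v v) $ i) =
        (v $ i + complex_of_real (h*th) * (A *v v) $ i)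
        + w * (complex_of_real (h*(1-th)) * (A *v v) $ i - v $ i)
        + w^m * (- (complex_of_real (h*th) * (B *v v) $ i))
        + w^(m+1) * (- (complex_of_real (h*(1-th)) * (B *v v) $ i))" for i
      unfolding Lr_apply using m
      by (simp add: sum.distrib distrib_left if_distrib[of "\<lambda>t. t $ i"] scaleR_comp
          if_distrib[of "\<lambda>t. w^_ * t"] sum.delta D_def cong: if_cong)
         (simp add: scaleR_conv_of_real algebra_simps)
    then have ci: "(v $ i + complex_of_real (h*th) * (A *v v) $ i)
        + w * (complex_of_real (h*(1-th)) * (A *v v) $ i - v $ i)
        + w^m * (- (complex_of_real (h*th) * (B *v v) $ i))
        + w^(m+1) * (- (complex_of_real (h*(1-th)) * (B *v v) $ i)) = 0" for i
      using v(2) comp by (metis vec_eq_iff zero_index)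
    have "(1 - w) *s v + (of_real h * (of_real th + of_real (1-th) * w)) *s (A *v v)
             = (of_real h * w^m * (of_real th + of_real (1-th) * w)) *s (B *v v)"
    proof (rule iffD2[OF vec_eq_iff], rule allI)
      fix i
      have "(1 - w) * v $ i + (of_real h * (of_real th + of_real (1-th) * w)) * (A *v v) $ i
            - (of_real h * w^m * (of_real th + of_real (1-th) * w)) * (B *v v) $ i
            = (v $ i + complex_of_real (h*th) * (A *v v) $ i)
        + w * (complex_of_real (h*(1-th)) * (A *v v) $ i - v $ i)
        + w^m * (- (complex_of_real (h*th) * (B *v v) $ i))
        + w^(m+1) * (- (complex_of_real (h*(1-th)) * (B *v v) $ i))"
        by (simp add: algebra_simps)
      then have "(1 - w) * v $ i + (of_real h * (of_real th + of_real (1-th) * w)) * (A *v v) $ i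
            - (of_real h * w^m * (of_real th + of_real (1-th) * w)) * (B *v v) $ i = 0"
        using ci[of i] by simp
      then have e: "(1 - w) * v $ i + (of_real h * (of_real th + of_real (1-th) * w)) * (A *v v) $ i
            = (of_real h * w^m * (of_real th + of_real (1-th) * w)) * (B *v v) $ i"
        by (simp only: right_minus_eq)
      show "((1 - w) *s v + (of_real h * (of_real th + of_real (1-th) * w)) *s (A *v v)) $ i
             = ((of_real h * w^m * (of_real th + of_real (1-th) * w)) *s (B *v v)) $ i"
        unfolding vector_add_component vector_smult_component by (rule e)
    qed
    from core_vec[OF assms(2) th h w F this] show False using v(1) by simp
  qed
  show "theta_stable A B \<theta> 0 m (\<tau> / real m)"
    unfolding theta_stable_def
  proof (intro allI impI)
    fix y assume y: "theta_recursion A B \<theta> 0 m (\<tau> / real m) y"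
    define x where "x n = y (int n - int m)" for n
    have rec: "(\<Sum>l\<le>D. Lr l *v x (n - l)) = 0" if n: "n \<ge> D" for n
    proof -
      define j where "j = n - D"
      have nj: "n = j + m + 1" using n by (simp add: j_def D_def)
      have yj: "y (int j + 1) = y (int j)
       + (h * (1 - th)) *\<^sub>R (- (A *v y (int j)) + B *v y (int j - int m))
       + (h * th) *\<^sub>R (- (A *v y (int j + 1)) + B *v y (int j - int m + 1))"
        using y unfolding theta_recursion_def h_def th_def by (auto dest: spec[of _ "int j"])
      have x0: "x (n - 0) = y (int j + 1)" and x1: "x (n - 1) = y (int j)"
        and xm: "x (n - m) = y (int j - int m + 1)" and xm1: "x (n - (m+1)) = y (int j - int m)"
        unfolding x_def nj by (simp_all add: of_nat_diff algebra_simps)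
      have "(\<Sum>l\<le>D. Lr l *v x (n - l)) =
           (x (n - 0) + (h*th) *\<^sub>R (A *v x (n - 0)))
         + ((h*(1-th)) *\<^sub>R (A *v x (n - 1)) - x (n - 1))
         + (- ((h*th) *\<^sub>R (B *v x (n - m))))
         + (- ((h*(1-th)) *\<^sub>R (B *v x (n - (m+1)))))"
        unfolding Lr_apply using m
        by (simp add: sum.distrib D_def sum.delta cong: if_cong)
      also have "\<dots> = 0"
        unfolding x0 x1 xm xm1
        by (subst yj) (simp add: algebra_simps matrix_vector_right_distrib mv_scaleR)
      finally show ?thesis .
    qed
    have xk: "(\<lambda>n. x n $ k) \<longlonglongrightarrow> 0" for k
      by (rule gen_decay[OF rec roots]) auto
    show "(\<lambda>n. y (int n)) \<longlonglongrightarrow> 0"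
    proof (rule vec_tendstoI)
      fix k
      have "(\<lambda>n. x (n + m) $ k) \<longlonglongrightarrow> 0" using LIMSEQ_ignore_initial_segment[OF xk] .
      moreover have "x (n + m) = y (int n)" for n by (simp add: x_def)
      ultimately show "(\<lambda>n. y (int n) $ k) \<longlonglongrightarrow> 0 $ k" by simp
    qed
  qed
qed

end
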